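(* Let $N_T,K,N_S$ be positive integers, $\mathbf{R}_T\in\mathbb{C}^{N_T\times N_T}$ Hermitian positive semidefinite, $\mathbf{F}\in\mathbb{C}^{N_T\times K}$, $\rho>0$, and $\mathbf{T}(\mathbf{F})=\mathbf{R}_T^{1/2}\mathbf{F}\mathbf{F}^H\mathbf{R}_T^{1/2}$. Let $\delta(\rho)=\delta(\rho;\mathbf{F})$ be the solution of $$\delta(\rho)=\frac{1}{N_S}\mathrm{tr}\,\mathbf{T}(\mathbf{F})\left(\mathbf{I}+\frac{\rho}{1+\rho\delta(\rho)}\mathbf{T}(\mathbf{F})\right)^{-1},$$ and set $\alpha(\rho)=\frac{\rho}{1+\rho\delta(\rho)}$. Then the gradient $\boldsymbol{\Delta}'_\rho=\frac{\partial\delta(\rho)}{\partial\mathbf{F}^*}$ (the matrix whose $(m,n)$ entry is $\partial\delta(\rho)/\partial F^*_{m,n}$) is $$\boldsymbol{\Delta}'_\rho=\frac{\mathbf{R}_T^{1/2}\left(\mathbf{I}+\alpha(\rho)\mathbf{T}(\mathbf{F})\right)^{-2}\mathbf{R}_T^{1/2}\mathbf{F}}{N_S-\alpha^2(\rho)\,\mathrm{tr}\left[\left(\mathbf{T}(\mathbf{F})\left(\mathbf{I}+\alpha(\rho)\mathbf{T}(\mathbf{F})\right)^{-1}\right)^2\right]}.$$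
   Context: Derivatives with respect to $F^*_{m,n}$ are Wirtinger derivatives with respect to the complex conjugate of the $(m,n)$ entry of $\mathbf{F}$, treating $\mathbf{F}$ and $\mathbf{F}^*$ as independent. $\mathbf{R}_T^{1/2}$ is the Hermitian positive semidefinite square root and $(\cdot)^H$ the conjugate transpose. *)

theory Defs
  imports "HOL-Analysis.Analysis"
begin

text \<open>Complex matrices are rendered as complex^'c^'r (r rows, c columns);
  dimensions N_T, K are finite index types (hence positive).\<close>

definition cadj :: "complex^'c^'r \<Rightarrow> complex^'r^'c" where
  "cadj A = (\<chi> i j. cnj (A $ j $ i))"

definition hermitian :: "complex^'n^'n \<Rightarrow> bool" where
  "hermitian A \<longleftrightarrow> cadj A = A"

definition psd :: "complex^'n^'n \<Rightarrow> bool" where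
  "psd A \<longleftrightarrow> hermitian A \<and>
     (\<forall>x :: complex^'n. (\<Sum>i\<in>UNIV. cnj (x $ i) * (A *v x) $ i) \<in> \<real> \<and>
                        0 \<le> Re (\<Sum>i\<in>UNIV. cnj (x $ i) * (A *v x) $ i))"

text \<open>T(F) = R_T^{1/2} F F^H R_T^{1/2}, where S is the Hermitian PSD square root of R_T.\<close>
definition Tmat :: "complex^'n^'n \<Rightarrow> complex^'k^'n \<Rightarrow> complex^'n^'n" where
  "Tmat S F = S ** F ** cadj F ** S"

definition delta :: "nat \<Rightarrow> complex^'n^'n \<Rightarrow> real \<Rightarrow> complex^'k^'n \<Rightarrow> real" where
  "delta NS S \<rho> F = (THE d. 0 \<le> d \<and>
      complex_of_real d = trace (Tmat S F ** matrix_inv (mat 1 + mat (complex_of_real (\<rho> / (1 + \<rho> * d))) ** Tmat S F))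
                           / of_nat NS)"

definition munit :: "'r \<Rightarrow> 'c \<Rightarrow> complex \<Rightarrow> complex^'c^'r" where
  "munit m n c = (\<chi> i j. if i = m \<and> j = n then c else 0)"

definition has_wirtinger_conj_deriv ::
  "(complex^'c^'r \<Rightarrow> real) \<Rightarrow> complex^'c^'r \<Rightarrow> 'r \<Rightarrow> 'c \<Rightarrow> complex \<Rightarrow> bool" where
  "has_wirtinger_conj_deriv g F m n w \<longleftrightarrow>
     (\<exists>dx dy. ((\<lambda>t. g (F + munit m n (complex_of_real t))) has_real_derivative dx) (at 0) \<and>
              ((\<lambda>t. g (F + munit m n (\<i> * complex_of_real t))) has_real_derivative dy) (at 0) \<and>
              w = (complex_of_real dx + \<i> * complex_of_real dy) / 2)"

end

theory Submission
  imports Defs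
begin


definition ip :: "complex^'n \<Rightarrow> complex^'n \<Rightarrow> complex" where
  "ip x y = (\<Sum>i\<in>UNIV. cnj (x$i) * y$i)"

definition esum :: "complex^'c^'r \<Rightarrow> real" where
  "esum A = (\<Sum>i\<in>UNIV. \<Sum>j\<in>UNIV. cmod (A$i$j))"

lemma cscaleR: "r *\<^sub>R (z::complex) = complex_of_real r * z"
  by (simp add: scaleR_conv_of_real)

lemma cadj_nth[simp]: "cadj A $ i $ j = cnj (A $ j $ i)"
  by (simp add: cadj_def)

lemma cadj_cadj[simp]: "cadj (cadj A) = A"
  by (simp add: vec_eq_iff)

lemma cadj_mult: "cadj (A ** B) = cadj B ** cadj A"
  by (simp add: vec_eq_iff matrix_matrix_mult_def mult.commute)

lemma cadj_add: "cadj (A + B) = cadj A + cadj B"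
  by (simp add: vec_eq_iff)

lemma cadj_diff: "cadj (A - B) = cadj A - cadj B"
  by (simp add: vec_eq_iff)

lemma cadj_scaleR: "cadj (r *\<^sub>R A) = r *\<^sub>R cadj A"
  by (simp add: vec_eq_iff cscaleR)

lemma cadj_mat: "cadj (mat c :: complex^'n^'n) = mat (cnj c)"
  by (simp add: vec_eq_iff mat_def)

lemma mat_mult_left: "(mat c ** A) $ i $ j = c * A $ i $ j"
  by (simp add: matrix_matrix_mult_def mat_def if_distrib if_distribR sum.delta' cong: if_cong)

lemma mat_mult_right: "(A ** mat c) $ i $ j = A $ i $ j * c"
  by (simp add: matrix_matrix_mult_def mat_def if_distrib if_distribR sum.delta' cong: if_cong)

lemma mat_of_real: "mat (complex_of_real r) ** A = r *\<^sub>R A"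
  by (simp add: vec_eq_iff mat_mult_left cscaleR)

lemma mat_of_real_right: "A ** mat (complex_of_real r) = r *\<^sub>R A"
  by (simp add: vec_eq_iff mat_mult_right cscaleR mult.commute)

lemma matrix_sub_ldistrib: "(A::'a::ring_1^'n^'m) ** (B - C) = A ** B - A ** C"
  by (simp add: vec_eq_iff matrix_matrix_mult_def sum_subtractf right_diff_distrib)

lemma matrix_sub_rdistrib: "((A::'a::ring_1^'n^'m) - B) ** C = A ** C - B ** C"
  by (simp add: vec_eq_iff matrix_matrix_mult_def sum_subtractf left_diff_distrib)

lemma matrix_add_rdistrib': "((A::'a::semiring_1^'n^'m) + B) ** C = A ** C + B ** C"
  by (simp add: vec_eq_iff matrix_matrix_mult_def sum.distrib distrib_right)

lemma scaleR_matrix_right: "(A::complex^'n^'m) ** (r *\<^sub>R B) = r *\<^sub>R (A ** B)"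
  by (simp add: matrix_scalar_ac scalar_matrix_assoc)

lemma scaleR_matrix_left: "(r *\<^sub>R (A::complex^'n^'m)) ** B = r *\<^sub>R (A ** B)"
  by (simp add: scalar_matrix_assoc)

lemma trace_scaleR: "trace (r *\<^sub>R (A::complex^'n^'n)) = of_real r * trace A"
  by (simp add: trace_def cscaleR sum_distrib_left)

lemma trace_cadj: "trace (cadj A) = cnj (trace A)"
  by (simp add: trace_def)

lemma ip_adj: "ip x (B *v z) = ip (cadj B *v x) z"
proof -
  have "ip x (B *v z) = (\<Sum>i\<in>UNIV. \<Sum>j\<in>UNIV. cnj (x$i) * B$i$j * z$j)"
    by (simp add: ip_def matrix_vector_mult_def sum_distrib_left mult.assoc)
  also have "\<dots> = (\<Sum>j\<in>UNIV. \<Sum>i\<in>UNIV. cnj (x$i) * B$i$j * z$j)" by (rule sum.swap)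
  also have "\<dots> = ip (cadj B *v x) z"
    by (simp add: ip_def matrix_vector_mult_def sum_distrib_right sum_distrib_left mult_ac)
  finally show ?thesis .
qed

lemma ip_self: "ip x x = of_real (\<Sum>i\<in>UNIV. (cmod (x$i))\<^sup>2)"
  unfolding ip_def by (simp add: mult.commute complex_mult_cnj cmod_power2)

lemma ip_add_right: "ip x (y + z) = ip x y + ip x z"
  by (simp add: ip_def distrib_left sum.distrib)

lemma ip_scaleR_right: "ip x (r *\<^sub>R y) = of_real r * ip x y"
  by (simp add: ip_def cscaleR sum_distrib_left mult_ac)

lemma ip_cnj: "cnj (ip x y) = ip y x"
  by (simp add: ip_def mult.commute)



definition Am :: "complex^'n^'n \<Rightarrow> complex^'k^'n \<Rightarrow> real \<Rightarrow> complex^'n^'n" where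
  "Am S G a = mat 1 + mat (complex_of_real a) ** Tmat S G"

definition Qm :: "complex^'n^'n \<Rightarrow> complex^'k^'n \<Rightarrow> real \<Rightarrow> complex^'n^'n" where
  "Qm S G a = matrix_inv (Am S G a)"

lemma Am_alt: "Am S G a = mat 1 + a *\<^sub>R Tmat S G"
  by (simp add: Am_def mat_of_real)

lemma Tmat_eq: "cadj S = S \<Longrightarrow> Tmat S G = (S ** G) ** cadj (S ** G)"
  by (simp add: Tmat_def cadj_mult matrix_mul_assoc)

lemma cadj_Tmat: "cadj S = S \<Longrightarrow> cadj (Tmat S G) = Tmat S G"
  by (simp add: Tmat_def cadj_mult matrix_mul_assoc)

lemma ip_BB: "ip y ((B ** cadj B) *v y) = ip (cadj B *v y) (cadj B *v y)"
  by (simp add: ip_adj flip: matrix_vector_mul_assoc)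

lemma ip_T: assumes "cadj S = S"
  shows "\<exists>r\<ge>0. ip y (Tmat S G *v y) = complex_of_real r"
proof -
  define z where "z = cadj (S ** G) *v y"
  have "ip y (Tmat S G *v y) = ip z z" using assms by (simp add: Tmat_eq ip_BB z_def)
  also have "\<dots> = complex_of_real (\<Sum>i\<in>UNIV. (cmod (z$i))\<^sup>2)" by (rule ip_self)
  finally show ?thesis by (intro exI[of _ "\<Sum>i\<in>UNIV. (cmod (z$i))\<^sup>2"]) (auto intro: sum_nonneg)
qed

lemma scaleR_mv: "(r *\<^sub>R (A::complex^'n^'m)) *v x = r *\<^sub>R (A *v x)"
  by (simp add: vec_eq_iff matrix_vector_mult_def cscaleR sum_distrib_left mult_ac)

lemma ip_Am: assumes "cadj S = S" "a \<ge> 0"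
  shows "\<exists>r\<ge>0. ip y (Am S G a *v y) = complex_of_real ((\<Sum>i\<in>UNIV. (cmod (y$i))\<^sup>2) + a * r)"
proof -
  obtain r where r: "r \<ge> 0" "ip y (Tmat S G *v y) = complex_of_real r"
    using ip_T[OF assms(1)] by blast
  have "ip y (Am S G a *v y) = ip y y + of_real a * ip y (Tmat S G *v y)"
    by (simp add: Am_alt matrix_vector_mult_add_rdistrib ip_add_right ip_scaleR_right scaleR_mv)
  then show ?thesis using r by (auto simp: ip_self)
qed

lemma sumsq_zero: "(\<Sum>i\<in>UNIV. (cmod ((y::complex^'n)$i))\<^sup>2) = 0 \<Longrightarrow> y = 0"
  by (simp add: sum_nonneg_eq_0_iff vec_eq_iff)

lemma Am_inj: assumes "cadj S = S" "a \<ge> 0" "Am S G a *v x = 0"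
  shows "x = 0"
proof -
  obtain r where r: "r \<ge> 0" "ip x (Am S G a *v x) = complex_of_real ((\<Sum>i\<in>UNIV. (cmod (x$i))\<^sup>2) + a * r)"
    using ip_Am[OF assms(1,2)] by blast
  have "ip x (Am S G a *v x) = 0" using assms(3) by (simp add: ip_def)
  then have "(\<Sum>i\<in>UNIV. (cmod (x$i))\<^sup>2) + a * r = 0" using r(2) by (metis of_real_eq_0_iff)
  moreover have "(\<Sum>i\<in>UNIV. (cmod (x$i))\<^sup>2) \<ge> 0" "a * r \<ge> 0" using r assms by (auto intro: sum_nonneg)
  ultimately show ?thesis using sumsq_zero by (metis add_nonneg_eq_0_iff)
qed

lemma Qm_inv: assumes "cadj S = S" "a \<ge> 0"
  shows "Qm S G a ** Am S G a = mat 1" "Am S G a ** Qm S G a = mat 1"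
proof -
  obtain B where B: "B ** Am S G a = mat 1"
    using matrix_left_invertible_ker[of "Am S G a"] Am_inj[OF assms] by blast
  then have "Am S G a ** B = mat 1" using matrix_left_right_inverse by blast
  then have "\<exists>A'. Am S G a ** A' = mat 1 \<and> A' ** Am S G a = mat 1" using B by blast
  then have "Am S G a ** Qm S G a = mat 1 \<and> Qm S G a ** Am S G a = mat 1"
    unfolding Qm_def matrix_inv_def by (rule someI_ex)
  then show "Qm S G a ** Am S G a = mat 1" "Am S G a ** Qm S G a = mat 1" by auto
qed

lemma Qm_eq1: assumes "cadj S = S" "a \<ge> 0"
  shows "Qm S G a + a *\<^sub>R (Tmat S G ** Qm S G a) = mat 1"
  using Qm_inv(2)[OF assms] by (simp add: Am_alt matrix_add_rdistrib' scaleR_matrix_left)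

lemma Qm_eq2: assumes "cadj S = S" "a \<ge> 0"
  shows "Qm S G a + a *\<^sub>R (Qm S G a ** Tmat S G) = mat 1"
  using Qm_inv(1)[OF assms] by (simp add: Am_alt matrix_add_ldistrib scaleR_matrix_right)

lemma cadj_Am: "cadj S = S \<Longrightarrow> cadj (Am S G a) = Am S G a"
  by (simp add: Am_alt cadj_add cadj_scaleR cadj_Tmat cadj_mat)

lemma cadj_Qm: assumes "cadj S = S" "a \<ge> 0"
  shows "cadj (Qm S G a) = Qm S G a"
proof -
  have "cadj (Qm S G a) ** Am S G a = mat 1"
    using arg_cong[OF Qm_inv(2)[OF assms], of cadj] by (simp add: cadj_mult cadj_Am[OF assms(1)] cadj_mat)
  then have "cadj (Qm S G a) ** (Am S G a ** Qm S G a) = Qm S G a" by (simp add: matrix_mul_assoc)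
  then show ?thesis using Qm_inv(2)[OF assms, of G] by simp
qed

lemma sq_le_self: assumes "(x::real)\<^sup>2 \<le> x" shows "x \<le> 1"
proof (rule ccontr)
  assume "\<not> x \<le> 1"
  then have "x * 1 < x * x" by (intro mult_strict_left_mono) auto
  with assms show False by (simp add: power2_eq_square)
qed

lemma Qm_col: assumes "cadj S = S" "a \<ge> 0"
  shows "cmod (Qm S G a $ i $ j) \<le> 1"
proof -
  define y where "y = Qm S G a *v axis j 1"
  have yi: "y $ k = Qm S G a $ k $ j" for k
    by (simp add: y_def matrix_vector_mult_def axis_def if_distrib if_distribR sum.delta' cong: if_cong)
  have "Am S G a *v y = axis j 1" using Qm_inv(2)[OF assms, of G] by (simp add: y_def matrix_vector_mul_assoc)
  then have "ip y (Am S G a *v y) = cnj (y$j)"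
    by (simp add: ip_def axis_def if_distrib if_distribR sum.delta' cong: if_cong)
  moreover obtain r where r: "r \<ge> 0" "ip y (Am S G a *v y) = complex_of_real ((\<Sum>i\<in>UNIV. (cmod (y$i))\<^sup>2) + a * r)"
    using ip_Am[OF assms] by blast
  ultimately have e: "cnj (y$j) = complex_of_real ((\<Sum>i\<in>UNIV. (cmod (y$i))\<^sup>2) + a * r)" by simp
  define s where "s = (\<Sum>i\<in>UNIV. (cmod (y$i))\<^sup>2)"
  have s0: "(cmod (y$k))\<^sup>2 \<le> s" for k unfolding s_def
    by (rule member_le_sum) auto
  have nn: "s + a * r \<ge> 0" using r assms by (simp add: s_def sum_nonneg)
  have "cmod (y$j) = cmod (complex_of_real (s + a * r))" using e s_def by (metis complex_mod_cnj)
  also have "\<dots> = s + a * r" using nn by (metis norm_of_real abs_of_nonneg)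
  finally have cj: "cmod (y$j) \<ge> s" using r assms by (simp add: mult_nonneg_nonneg)
  have "(cmod (y$j))\<^sup>2 \<le> cmod (y$j)" using s0[of j] cj by linarith
  then have "cmod (y$j) \<le> 1" by (rule sq_le_self)
  then have "(cmod (y$i))\<^sup>2 \<le> 1" using s0[of i] cj by linarith
  then have "cmod (y$i) \<le> 1" by (simp add: power_le_one_iff abs_le_square_iff)
  then show ?thesis by (simp add: yi)
qed



lemma esum_nonneg: "esum A \<ge> 0"
  by (simp add: esum_def sum_nonneg)

lemma entry_le_esum: "cmod (A$i$j) \<le> esum A"
proof -
  have "cmod (A$i$j) \<le> (\<Sum>j\<in>UNIV. cmod (A$i$j))" by (rule member_le_sum) auto
  also have "\<dots> \<le> esum A" unfolding esum_def by (rule member_le_sum) (auto intro: sum_nonneg)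
  finally show ?thesis .
qed

lemma row_le_esum: "(\<Sum>j\<in>UNIV. cmod (A$i$j)) \<le> esum A"
  unfolding esum_def by (rule member_le_sum) (auto intro: sum_nonneg)

lemma esum_mult: "esum (A ** B) \<le> esum A * esum B"
proof -
  have "esum (A ** B) \<le> (\<Sum>i\<in>UNIV. \<Sum>j\<in>UNIV. \<Sum>k\<in>UNIV. cmod (A$i$k) * cmod (B$k$j))"
    unfolding esum_def matrix_matrix_mult_def
    by (auto intro!: sum_mono order.trans[OF norm_sum] simp: norm_mult)
  also have "\<dots> = (\<Sum>i\<in>UNIV. \<Sum>k\<in>UNIV. cmod (A$i$k) * (\<Sum>j\<in>UNIV. cmod (B$k$j)))"
    by (simp add: sum_distrib_left) (intro sum.cong refl sum.swap)
  also have "\<dots> \<le> (\<Sum>i\<in>UNIV. \<Sum>k\<in>UNIV. cmod (A$i$k) * esum B)"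
    by (intro sum_mono mult_left_mono row_le_esum) auto
  also have "\<dots> = esum A * esum B"
    by (simp add: esum_def sum_distrib_right)
  finally show ?thesis .
qed

lemma esum_add: "esum (A + B) \<le> esum A + esum B"
  unfolding esum_def by (simp add: sum.distrib[symmetric] sum_mono norm_triangle_ineq)

lemma esum_minus: "esum (- A) = esum A"
  unfolding esum_def by simp

lemma esum_diff: "esum (A - B) \<le> esum A + esum B"
  using esum_add[of A "- B"] by (simp add: esum_minus)

lemma esum_commute: "esum (A - B) = esum (B - A)"
  using esum_minus[of "A - B"] by simp

lemma esum_scaleR: "esum (r *\<^sub>R A) = \<bar>r\<bar> * esum A"
  unfolding esum_def by (simp add: sum_distrib_left)

lemma trace_le_esum: "cmod (trace A) \<le> esum A"
proof -
  have "cmod (trace A) \<le> (\<Sum>i\<in>UNIV. cmod (A$i$i))" unfolding trace_def by (rule norm_sum)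
  also have "\<dots> \<le> esum A" unfolding esum_def
    by (intro sum_mono member_le_sum) auto
  finally show ?thesis .
qed

lemma norm_le_esum: "norm A \<le> esum A"
proof -
  have "norm A \<le> (\<Sum>i\<in>UNIV. norm (A$i))" unfolding norm_vec_def by (rule L2_set_le_sum) auto
  also have "\<dots> \<le> (\<Sum>i\<in>UNIV. \<Sum>j\<in>UNIV. norm (A$i$j))"
    by (intro sum_mono) (simp add: norm_vec_def L2_set_le_sum)
  finally show ?thesis by (simp add: esum_def)
qed

lemma tendsto_esum: "(f \<longlongrightarrow> L) F \<Longrightarrow> ((\<lambda>x. esum (f x)) \<longlongrightarrow> esum L) F"
  unfolding esum_def by (intro tendsto_intros)

lemma esum_zero_tendsto: "((\<lambda>x. esum (f x - L)) \<longlongrightarrow> 0) F \<Longrightarrow> (f \<longlongrightarrow> L) F"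
  apply (rule LIM_zero_cancel)
  apply (rule Lim_null_comparison[where g="\<lambda>x. esum (f x - L)"])
  apply (auto intro!: always_eventually norm_le_esum)
  done

lemma Qm_esum: fixes S :: "complex^'n^'n" assumes "cadj S = S" "a \<ge> 0"
  shows "esum (Qm S G a) \<le> real CARD('n) ^ 2"
proof -
  have "esum (Qm S G a) \<le> (\<Sum>i\<in>(UNIV::'n set). \<Sum>j\<in>(UNIV::'n set). 1)"
    unfolding esum_def using Qm_col[OF assms, of G] by (intro sum_mono) auto
  then show ?thesis by (simp add: power2_eq_square)
qed

lemma resolvent: "(X::complex^'n^'n) ** A = mat 1 \<Longrightarrow> B ** Y = mat 1 \<Longrightarrow> X - Y = X ** (B - A) ** Y"
proof -
  assume h: "X ** A = mat 1" "B ** Y = mat 1"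
  have "X ** (B - A) ** Y = X ** (B ** Y) - (X ** A) ** Y"
    by (simp add: matrix_sub_ldistrib matrix_sub_rdistrib matrix_mul_assoc)
  then show ?thesis using h by simp
qed

lemma Qm_resolvent: assumes "cadj S = S" "a \<ge> 0" "b \<ge> 0"
  shows "Qm S G a - Qm S H b = Qm S G a ** (b *\<^sub>R Tmat S H - a *\<^sub>R Tmat S G) ** Qm S H b"
proof -
  have "Qm S G a - Qm S H b = Qm S G a ** (Am S H b - Am S G a) ** Qm S H b"
    by (rule resolvent[OF Qm_inv(1)[OF assms(1,2)] Qm_inv(2)[OF assms(1,3)]])
  then show ?thesis by (simp add: Am_alt)
qed

lemma Qm_diff_esum: fixes S :: "complex^'n^'n" assumes "cadj S = S" "a \<ge> 0" "b \<ge> 0"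
  shows "esum (Qm S G a - Qm S H b) \<le> real CARD('n) ^ 2 * esum (b *\<^sub>R Tmat S H - a *\<^sub>R Tmat S G) * real CARD('n) ^ 2"
proof -
  have "esum (Qm S G a - Qm S H b) \<le> esum (Qm S G a) * esum (b *\<^sub>R Tmat S H - a *\<^sub>R Tmat S G) * esum (Qm S H b)"
    unfolding Qm_resolvent[OF assms]
    by (rule order.trans[OF esum_mult]) (intro mult_right_mono esum_mult esum_nonneg)
  also have "\<dots> \<le> real CARD('n) ^ 2 * esum (b *\<^sub>R Tmat S H - a *\<^sub>R Tmat S G) * real CARD('n) ^ 2"
    by (intro mult_mono Qm_esum assms esum_nonneg mult_nonneg_nonneg) auto
  finally show ?thesis .
qed



lemma ip_add_left: "ip (x + y) z = ip x z + ip y z"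
  by (simp add: ip_def distrib_right sum.distrib)

lemma ip_scaleR_left: "ip (r *\<^sub>R x) z = of_real r * ip x z"
  by (simp add: ip_def cscaleR sum_distrib_left mult_ac)

lemma self_cnj_real: assumes h: "z = cnj z" shows "z = complex_of_real (Re z)"
proof -
  have "Im (cnj z) = - Im z" by simp
  then have "Im z = - Im z" using h by metis
  then have "Im z = 0" by linarith
  then show ?thesis by (simp add: complex_eq_iff)
qed

lemma trace_Qm_real: assumes "cadj S = S" "a \<ge> 0"
  shows "trace (Qm S G a) = complex_of_real (Re (trace (Qm S G a)))"
  using trace_cadj[of "Qm S G a"] cadj_Qm[OF assms, of G] by (intro self_cnj_real) simp

lemma col_diag: "(cadj B ** W ** B) $ k $ k = ip (column k B) (W *v column k B)"
proof -
  have "(cadj B ** W ** B) $ k $ k = (\<Sum>j\<in>UNIV. \<Sum>i\<in>UNIV. cnj (B$i$k) * W$i$j * B$j$k)"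
    by (simp add: matrix_matrix_mult_def sum_distrib_right)
  also have "\<dots> = (\<Sum>i\<in>UNIV. \<Sum>j\<in>UNIV. cnj (B$i$k) * W$i$j * B$j$k)" by (rule sum.swap)
  also have "\<dots> = ip (column k B) (W *v column k B)"
    by (simp add: ip_def column_def matrix_vector_mult_def sum_distrib_left mult.assoc)
  finally show ?thesis .
qed

lemma Am_mv: "Am S G a *v y = y + a *\<^sub>R (Tmat S G *v y)"
  by (simp add: Am_alt matrix_vector_mult_add_rdistrib scaleR_mv)

lemma ip_W: assumes h: "cadj S = S" "a \<ge> 0" "b \<ge> 0"
  shows "\<exists>r\<ge>0. ip c ((Qm S G b ** Qm S G a) *v c) = complex_of_real r"
proof -
  define y where "y = (Qm S G b ** Qm S G a) *v c"
  define T where "T = Tmat S G"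
  have M: "Am S G a ** (Am S G b ** (Qm S G b ** Qm S G a)) = mat 1"
    using Qm_inv(2)[OF h(1,2), of G] Qm_inv(2)[OF h(1,3), of G] by (simp add: matrix_mul_assoc)
  have c: "c = Am S G a *v (Am S G b *v y)"
    using M by (simp add: y_def matrix_vector_mul_assoc)
  have "ip c y = cnj (ip y (Am S G a *v (Am S G b *v y)))" using c by (simp add: ip_cnj)
  also have "ip y (Am S G a *v (Am S G b *v y)) = ip (Am S G a *v y) (Am S G b *v y)"
    by (simp add: ip_adj cadj_Am[OF h(1)])
  also have "\<dots> = ip y y + of_real b * ip y (T *v y) + of_real a * (ip (T *v y) y
       + of_real b * ip (T *v y) (T *v y))"
    by (simp add: Am_mv ip_add_left ip_add_right ip_scaleR_left ip_scaleR_right T_def) (simp add: algebra_simps)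
  finally have e: "ip c y = cnj (ip y y + of_real b * ip y (T *v y) + of_real a * (ip (T *v y) y
       + of_real b * ip (T *v y) (T *v y)))" .
  obtain r where r: "r \<ge> 0" "ip y (T *v y) = complex_of_real r" using ip_T[OF h(1)] T_def by blast
  have r2: "ip (T *v y) y = complex_of_real r" using r(2) ip_cnj[of y "T *v y"] by simp
  define s1 where "s1 = (\<Sum>i\<in>UNIV. (cmod (y$i))\<^sup>2)"
  define s2 where "s2 = (\<Sum>i\<in>UNIV. (cmod ((T *v y)$i))\<^sup>2)"
  have s: "s1 \<ge> 0" "s2 \<ge> 0" by (auto simp: s1_def s2_def intro: sum_nonneg)
  have "ip c y = complex_of_real (s1 + b * r + a * r + a * b * s2)"
    unfolding e r(2) r2 by (simp add: ip_self s1_def s2_def) (simp add: algebra_simps)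
  moreover have "s1 + b * r + a * r + a * b * s2 \<ge> 0" using s r h by simp
  ultimately show ?thesis unfolding y_def by blast
qed

lemma trace_QTQ: assumes h: "cadj S = S" "a \<ge> 0" "b \<ge> 0"
  shows "\<exists>r\<ge>0. trace (Qm S G a ** Tmat S G ** Qm S G b) = complex_of_real r"
proof -
  define B where "B = S ** G"
  define W where "W = Qm S G b ** Qm S G a"
  have "Qm S G a ** Tmat S G ** Qm S G b = (Qm S G a ** B) ** (cadj B ** Qm S G b)"
    by (simp add: Tmat_eq[OF h(1)] B_def matrix_mul_assoc)
  then have "trace (Qm S G a ** Tmat S G ** Qm S G b) = trace ((cadj B ** Qm S G b) ** (Qm S G a ** B))"
    using trace_mul_sym[of "Qm S G a ** B" "cadj B ** Qm S G b"] by simp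
  also have "\<dots> = trace (cadj B ** W ** B)" by (simp add: W_def matrix_mul_assoc)
  also have "\<dots> = (\<Sum>k\<in>UNIV. ip (column k B) (W *v column k B))"
    by (simp add: trace_def col_diag)
  finally have e: "trace (Qm S G a ** Tmat S G ** Qm S G b) = (\<Sum>k\<in>UNIV. ip (column k B) (W *v column k B))" .
  have "\<forall>k. \<exists>r\<ge>0. ip (column k B) (W *v column k B) = complex_of_real r"
    using ip_W[OF h] W_def by blast
  then obtain rr where rr: "\<And>k. rr k \<ge> 0 \<and> ip (column k B) (W *v column k B) = complex_of_real (rr k)"
    using choice[of "\<lambda>k r. r \<ge> 0 \<and> ip (column k B) (W *v column k B) = complex_of_real r"] by blast
  have "trace (Qm S G a ** Tmat S G ** Qm S G b) = complex_of_real (\<Sum>k\<in>UNIV. rr k)"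
    unfolding e using rr by simp
  moreover have "(\<Sum>k\<in>UNIV. rr k) \<ge> 0" using rr by (simp add: sum_nonneg)
  ultimately show ?thesis by blast
qed

definition fQ :: "complex^'n^'n \<Rightarrow> complex^'k^'n \<Rightarrow> real \<Rightarrow> real" where
  "fQ S G a = Re (trace (Qm S G a))"

lemma fQ_mono: assumes h: "cadj S = S" "0 \<le> a" "a \<le> b"
  shows "fQ S G b \<le> fQ S G a"
proof -
  have b: "b \<ge> 0" using h by simp
  have "Qm S G a - Qm S G b = Qm S G a ** (b *\<^sub>R Tmat S G - a *\<^sub>R Tmat S G) ** Qm S G b"
    by (rule Qm_resolvent[OF h(1,2) b])
  also have "\<dots> = (b - a) *\<^sub>R (Qm S G a ** Tmat S G ** Qm S G b)"
    by (simp add: scaleR_matrix_left scaleR_matrix_right flip: scaleR_diff_left)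
  finally have e: "trace (Qm S G a) - trace (Qm S G b) = of_real (b - a) * trace (Qm S G a ** Tmat S G ** Qm S G b)"
    by (metis trace_sub trace_scaleR)
  obtain r where r: "r \<ge> 0" "trace (Qm S G a ** Tmat S G ** Qm S G b) = complex_of_real r"
    using trace_QTQ[OF h(1,2) b] by blast
  have "fQ S G a - fQ S G b = (b - a) * r"
    using arg_cong[OF e, of Re] r by (simp add: fQ_def)
  moreover have "(b - a) * r \<ge> 0" using h r by simp
  ultimately show ?thesis by simp
qed

lemma Qm_zero: assumes "cadj S = S" shows "Qm S G 0 = mat 1"
  using Qm_inv(1)[OF assms, of 0 G] by (simp add: Am_alt)

lemma fQ_zero: fixes S :: "complex^'n^'n" assumes "cadj S = S" shows "fQ S G 0 = real CARD('n)"
  by (simp add: fQ_def Qm_zero[OF assms] trace_I)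

lemma fQ_le: fixes S :: "complex^'n^'n" assumes "cadj S = S" "a \<ge> 0"
  shows "fQ S G a \<le> real CARD('n)"
proof -
  have "fQ S G a = (\<Sum>i\<in>UNIV. Re (Qm S G a $ i $ i))" by (simp add: fQ_def trace_def)
  also have "\<dots> \<le> (\<Sum>i\<in>(UNIV::'n set). 1)"
    using Qm_col[OF assms, of G] by (intro sum_mono) (meson complex_Re_le_cmod order.trans)
  finally show ?thesis by simp
qed

lemma fQ_diff: fixes S :: "complex^'n^'n" assumes "cadj S = S" "a \<ge> 0" "b \<ge> 0"
  shows "\<bar>fQ S G a - fQ S H b\<bar> \<le> real CARD('n) ^ 2 * esum (b *\<^sub>R Tmat S H - a *\<^sub>R Tmat S G) * real CARD('n) ^ 2"
proof -
  have "\<bar>fQ S G a - fQ S H b\<bar> = \<bar>Re (trace (Qm S G a - Qm S H b))\<bar>" by (simp add: fQ_def trace_sub)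
  also have "\<dots> \<le> cmod (trace (Qm S G a - Qm S H b))" by (rule abs_Re_le_cmod)
  also have "\<dots> \<le> esum (Qm S G a - Qm S H b)" by (rule trace_le_esum)
  also have "\<dots> \<le> real CARD('n) ^ 2 * esum (b *\<^sub>R Tmat S H - a *\<^sub>R Tmat S G) * real CARD('n) ^ 2"
    by (rule Qm_diff_esum[OF assms])
  finally show ?thesis .
qed

lemma fQ_cont: fixes S :: "complex^'n^'n" assumes "cadj S = S"
  shows "continuous_on {0..} (fQ S G)"
proof (rule lipschitz_on_continuous_on[where L="real CARD('n) ^ 2 * esum (Tmat S G) * real CARD('n) ^ 2"],
       rule lipschitz_onI)
  fix x y :: real assume xy: "x \<in> {0..}" "y \<in> {0..}"
  have "\<bar>fQ S G x - fQ S G y\<bar> \<le> real CARD('n) ^ 2 * esum (y *\<^sub>R Tmat S G - x *\<^sub>R Tmat S G) * real CARD('n) ^ 2"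
    using xy by (intro fQ_diff assms) auto
  also have "esum (y *\<^sub>R Tmat S G - x *\<^sub>R Tmat S G) = \<bar>y - x\<bar> * esum (Tmat S G)"
    by (simp add: esum_scaleR flip: scaleR_diff_left)
  finally show "dist (fQ S G x) (fQ S G y) \<le> real CARD('n) ^ 2 * esum (Tmat S G) * real CARD('n) ^ 2 * dist x y"
    by (simp add: dist_real_def abs_minus_commute mult_ac)
qed (simp add: esum_nonneg)



definition psi :: "complex^'n^'n \<Rightarrow> complex^'k^'n \<Rightarrow> nat \<Rightarrow> real \<Rightarrow> real \<Rightarrow> real" where
  "psi S G N \<rho> a = 1 - a / \<rho> - real CARD('n) / real N + fQ S G a / real N"

lemma psi_strict: fixes S :: "complex^'n^'n"
  assumes "cadj S = S" "N > 0" "\<rho> > 0" "0 \<le> a" "a < b"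
  shows "psi S G N \<rho> b < psi S G N \<rho> a"
proof -
  have "fQ S G b \<le> fQ S G a" using fQ_mono[OF assms(1,4), where G=G and b=b] assms by simp
  then have "fQ S G b / real N \<le> fQ S G a / real N" using assms by (simp add: divide_right_mono)
  moreover have "a / \<rho> < b / \<rho>" using assms by (simp add: divide_strict_right_mono)
  ultimately show ?thesis by (simp add: psi_def)
qed

lemma psi_zero: fixes S :: "complex^'n^'n" assumes "cadj S = S" "N > 0"
  shows "psi S G N \<rho> 0 = 1"
  using assms by (simp add: psi_def fQ_zero)

lemma root_exists: fixes S :: "complex^'n^'n"
  assumes "cadj S = S" "N > 0" "\<rho> > 0"
  shows "\<exists>a. 0 < a \<and> a \<le> \<rho> \<and> psi S G N \<rho> a = 0"
proof -
  have c: "continuous_on {0..\<rho>} (fQ S G)"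
    by (rule continuous_on_subset[OF fQ_cont[OF assms(1)]]) auto
  have "continuous_on {0..\<rho>} (psi S G N \<rho>)"
    unfolding psi_def[abs_def] by (intro continuous_intros c) (use assms in auto)
  moreover have "psi S G N \<rho> \<rho> \<le> 0"
    using fQ_le[OF assms(1), of \<rho> G] assms by (simp add: psi_def divide_right_mono)
  moreover have "0 \<le> psi S G N \<rho> 0" using psi_zero[OF assms(1,2), where G=G and \<rho>=\<rho>] by simp
  ultimately obtain a where a: "0 \<le> a" "a \<le> \<rho>" "psi S G N \<rho> a = 0"
    using IVT2'[of "psi S G N \<rho>" \<rho> 0 0] assms by auto
  moreover have "a \<noteq> 0" using a psi_zero[OF assms(1,2), where G=G and \<rho>=\<rho>] by auto
  ultimately show ?thesis by (intro exI[of _ a]) auto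
qed

lemma trace_TQ: fixes S :: "complex^'n^'n" assumes "cadj S = S" "c > 0"
  shows "trace (Tmat S G ** Qm S G c) = (of_nat CARD('n) - complex_of_real (fQ S G c)) / complex_of_real c"
proof -
  have "trace (Qm S G c + c *\<^sub>R (Tmat S G ** Qm S G c)) = of_nat CARD('n)"
    using Qm_eq1[OF assms(1), of c G] assms by (simp add: trace_I)
  then have "trace (Qm S G c) + of_real c * trace (Tmat S G ** Qm S G c) = of_nat CARD('n)"
    by (simp add: trace_add trace_scaleR)
  moreover have "trace (Qm S G c) = complex_of_real (fQ S G c)"
    using trace_Qm_real[OF assms(1), of c G] assms by (simp add: fQ_def)
  ultimately show ?thesis using assms by (simp add: field_simps)
qed

lemma P_iff: fixes S :: "complex^'n^'n"
  assumes "cadj S = S" "N > 0" "\<rho> > 0" "d \<ge> 0"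
  shows "(complex_of_real d = trace (Tmat S G ** matrix_inv (mat 1 + mat (complex_of_real (\<rho> / (1 + \<rho> * d))) ** Tmat S G)) / of_nat N)
     \<longleftrightarrow> psi S G N \<rho> (\<rho> / (1 + \<rho> * d)) = 0"
proof -
  define c where "c = \<rho> / (1 + \<rho> * d)"
  have cpos: "c > 0" using assms by (simp add: c_def add_pos_nonneg)
  have inv: "1 / c = 1 / \<rho> + d" using assms by (simp add: c_def field_simps)
  have m: "matrix_inv (mat 1 + mat (complex_of_real c) ** Tmat S G) = Qm S G c"
    by (simp add: Qm_def Am_def)
  have "(complex_of_real d = trace (Tmat S G ** Qm S G c) / of_nat N)
      \<longleftrightarrow> complex_of_real d = complex_of_real ((real CARD('n) - fQ S G c) / c / real N)"
    using trace_TQ[OF assms(1) cpos, of G] by simp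
  also have "\<dots> \<longleftrightarrow> d = (real CARD('n) - fQ S G c) / c / real N" by (rule of_real_eq_iff)
  also have "\<dots> \<longleftrightarrow> d * c * real N = real CARD('n) - fQ S G c"
    using cpos assms by (auto simp: field_simps)
  also have "d * c = 1 - c / \<rho>" using inv cpos assms by (simp add: field_simps)
  also have "((1 - c / \<rho>) * real N = real CARD('n) - fQ S G c) \<longleftrightarrow> psi S G N \<rho> c = 0"
    using assms by (auto simp: psi_def field_simps)
  finally have X: "(complex_of_real d = trace (Tmat S G ** Qm S G c) / of_nat N) \<longleftrightarrow> psi S G N \<rho> c = 0" .
  show ?thesis unfolding c_def[symmetric] m by (rule X)
qed

lemma delta_eq: fixes S :: "complex^'n^'n"
  assumes "cadj S = S" "N > 0" "\<rho> > 0" "0 < a" "a \<le> \<rho>" "psi S G N \<rho> a = 0"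
  shows "delta N S \<rho> G = 1 / a - 1 / \<rho>"
  unfolding delta_def
proof (rule the_equality)
  have "1 / \<rho> \<le> 1 / a" using assms by (intro divide_left_mono) auto
  then have d0: "1 / a - 1 / \<rho> \<ge> 0" by simp
  have e1: "1 + \<rho> * (1 / a - 1 / \<rho>) = \<rho> / a" using assms by (simp add: field_simps)
  have ca: "\<rho> / (1 + \<rho> * (1 / a - 1 / \<rho>)) = a" unfolding e1 using assms by simp
  have p: "psi S G N \<rho> (\<rho> / (1 + \<rho> * (1 / a - 1 / \<rho>))) = 0" unfolding ca by (rule assms(6))
  show "0 \<le> 1 / a - 1 / \<rho> \<and> complex_of_real (1 / a - 1 / \<rho>) =
    trace (Tmat S G ** matrix_inv (mat 1 + mat (complex_of_real (\<rho> / (1 + \<rho> * (1 / a - 1 / \<rho>)))) ** Tmat S G)) / of_nat N"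
    using P_iff[OF assms(1-3) d0, of G] p d0 by blast
next
  fix d assume h: "0 \<le> d \<and> complex_of_real d = trace (Tmat S G ** matrix_inv (mat 1 + mat (complex_of_real (\<rho> / (1 + \<rho> * d))) ** Tmat S G)) / of_nat N"
  then have h1: "0 \<le> d" by blast
  define c where "c = \<rho> / (1 + \<rho> * d)"
  have p: "psi S G N \<rho> c = 0" using P_iff[OF assms(1-3) h1, of G] h unfolding c_def by blast
  have dpos: "1 + \<rho> * d > 0" using assms h1 by (simp add: add_pos_nonneg)
  have cpos: "c > 0" using assms dpos by (simp add: c_def)
  have "c = a"
  proof (rule ccontr)
    assume "c \<noteq> a"
    then consider "c < a" | "a < c" by linarith
    then show False
    proof cases
      case 1
      have "psi S G N \<rho> a < psi S G N \<rho> c"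
        by (rule psi_strict[OF assms(1-3)]) (use cpos 1 in auto)
      then show ?thesis using p assms(6) by simp
    next
      case 2
      have "psi S G N \<rho> c < psi S G N \<rho> a"
        by (rule psi_strict[OF assms(1-3)]) (use assms 2 in auto)
      then show ?thesis using p assms(6) by simp
    qed
  qed
  moreover have "1 / c = 1 / \<rho> + d" using assms dpos by (simp add: c_def field_simps)
  ultimately show "d = 1 / a - 1 / \<rho>" by simp
qed

lemma delta_root: fixes S :: "complex^'n^'n" and G :: "complex^'k^'n"
  assumes "cadj S = S" "N > 0" "\<rho> > 0"
  defines "a \<equiv> \<rho> / (1 + \<rho> * delta N S \<rho> G)"
  shows "0 < a" "a \<le> \<rho>" "psi S G N \<rho> a = 0" "delta N S \<rho> G \<ge> 0"
    "complex_of_real (delta N S \<rho> G) * of_nat N = trace (Tmat S G ** Qm S G a)"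
proof -
  obtain a0 where a0: "0 < a0" "a0 \<le> \<rho>" "psi S G N \<rho> a0 = 0" using root_exists[OF assms(1-3)] by blast
  have de: "delta N S \<rho> G = 1 / a0 - 1 / \<rho>" by (rule delta_eq[OF assms(1-3) a0])
  have e1: "1 + \<rho> * (1 / a0 - 1 / \<rho>) = \<rho> / a0" using a0 assms by (simp add: field_simps)
  have aa: "a = a0" unfolding a_def de e1 using a0 assms by simp
  show "0 < a" "a \<le> \<rho>" "psi S G N \<rho> a = 0" using a0 aa by auto
  have "1 / \<rho> \<le> 1 / a0" using a0 assms by (intro divide_left_mono) auto
  then show d0: "delta N S \<rho> G \<ge> 0" using de by simp
  have p: "psi S G N \<rho> (\<rho> / (1 + \<rho> * delta N S \<rho> G)) = 0" using a0 aa by (simp add: a_def)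
  have "complex_of_real (delta N S \<rho> G) = trace (Tmat S G ** matrix_inv (mat 1 + mat (complex_of_real (\<rho> / (1 + \<rho> * delta N S \<rho> G))) ** Tmat S G)) / of_nat N"
    using P_iff[OF assms(1-3) d0, of G] p by blast
  then have "complex_of_real (delta N S \<rho> G) = trace (Tmat S G ** Qm S G a) / of_nat N"
    unfolding a_def Qm_def Am_def .
  then show "complex_of_real (delta N S \<rho> G) * of_nat N = trace (Tmat S G ** Qm S G a)"
    using assms by (simp add: eq_divide_eq)
qed



lemma tendsto_mmult: fixes f :: "'x \<Rightarrow> complex^'n^'m" and g :: "'x \<Rightarrow> complex^'p^'n"
  assumes "(f \<longlongrightarrow> A) F" "(g \<longlongrightarrow> B) F"
  shows "((\<lambda>x. f x ** g x) \<longlongrightarrow> A ** B) F"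
  unfolding matrix_matrix_mult_def
  by (intro tendsto_vec_lambda tendsto_sum tendsto_mult tendsto_vec_nth assms)

lemma tendsto_trace: fixes f :: "'x \<Rightarrow> complex^'n^'n"
  assumes "(f \<longlongrightarrow> A) F"
  shows "((\<lambda>x. trace (f x)) \<longlongrightarrow> trace A) F"
  unfolding trace_def by (intro tendsto_sum tendsto_vec_nth assms)

definition T1 :: "complex^'n^'n \<Rightarrow> complex^'k^'n \<Rightarrow> complex^'k^'n \<Rightarrow> complex^'n^'n" where
  "T1 S F E = S ** F ** cadj E ** S + S ** E ** cadj F ** S"

definition T2 :: "complex^'n^'n \<Rightarrow> complex^'k^'n \<Rightarrow> complex^'n^'n" where
  "T2 S E = S ** E ** cadj E ** S"

lemma Tmat_path: "Tmat S (F + t *\<^sub>R E) = Tmat S F + t *\<^sub>R (T1 S F E + t *\<^sub>R T2 S E)"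
  by (simp add: Tmat_def T1_def T2_def cadj_add cadj_scaleR matrix_add_ldistrib matrix_add_rdistrib'
      scaleR_matrix_left scaleR_matrix_right algebra_simps)

lemma Tmat_path_tendsto: "((\<lambda>t. Tmat S (F + t *\<^sub>R E)) \<longlongrightarrow> Tmat S F) (at (0::real))"
proof -
  have "((\<lambda>t. Tmat S F + t *\<^sub>R (T1 S F E + t *\<^sub>R T2 S E)) \<longlongrightarrow> Tmat S F + 0 *\<^sub>R (T1 S F E + 0 *\<^sub>R T2 S E)) (at (0::real))"
    by (intro tendsto_intros)
  then show ?thesis by (simp add: Tmat_path)
qed

lemma fQ_path_tendsto: fixes S :: "complex^'n^'n"
  assumes "cadj S = S" "a \<ge> 0"
  shows "((\<lambda>t. fQ S (F + t *\<^sub>R E) a) \<longlongrightarrow> fQ S F a) (at (0::real))"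
proof -
  define C where "C = real CARD('n) ^ 2 * real CARD('n) ^ 2"
  have "((\<lambda>t. C * esum (a *\<^sub>R Tmat S F - a *\<^sub>R Tmat S (F + t *\<^sub>R E))) \<longlongrightarrow> C * esum (a *\<^sub>R Tmat S F - a *\<^sub>R Tmat S F)) (at (0::real))"
    by (intro tendsto_intros tendsto_esum Tmat_path_tendsto)
  then have lim: "((\<lambda>t. C * esum (a *\<^sub>R Tmat S F - a *\<^sub>R Tmat S (F + t *\<^sub>R E))) \<longlongrightarrow> 0) (at (0::real))"
    by (simp add: esum_def)
  have "((\<lambda>t. fQ S (F + t *\<^sub>R E) a - fQ S F a) \<longlongrightarrow> 0) (at (0::real))"
  proof (rule Lim_null_comparison[OF _ lim], rule always_eventually, rule allI)
    fix t :: real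
    have "\<bar>fQ S (F + t *\<^sub>R E) a - fQ S F a\<bar> \<le> real CARD('n) ^ 2 * esum (a *\<^sub>R Tmat S F - a *\<^sub>R Tmat S (F + t *\<^sub>R E)) * real CARD('n) ^ 2"
      by (rule fQ_diff[OF assms(1,2,2)])
    then show "norm (fQ S (F + t *\<^sub>R E) a - fQ S F a) \<le> C * esum (a *\<^sub>R Tmat S F - a *\<^sub>R Tmat S (F + t *\<^sub>R E))"
      by (simp add: C_def mult_ac)
  qed
  then show ?thesis by (rule LIM_zero_cancel)
qed

lemma psi_path_tendsto: fixes S :: "complex^'n^'n"
  assumes "cadj S = S" "a \<ge> 0" "N > 0"
  shows "((\<lambda>t. psi S (F + t *\<^sub>R E) N \<rho> a) \<longlongrightarrow> psi S F N \<rho> a) (at (0::real))"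
  unfolding psi_def by (intro tendsto_intros fQ_path_tendsto assms) (use assms in auto)

definition apath :: "nat \<Rightarrow> complex^'n^'n \<Rightarrow> real \<Rightarrow> complex^'k^'n \<Rightarrow> complex^'k^'n \<Rightarrow> real \<Rightarrow> real" where
  "apath N S \<rho> F E t = \<rho> / (1 + \<rho> * delta N S \<rho> (F + t *\<^sub>R E))"

lemma apath_tendsto: fixes S :: "complex^'n^'n" and F E :: "complex^'k^'n"
  assumes h: "cadj S = S" "N > 0" "\<rho> > 0"
  shows "((apath N S \<rho> F E) \<longlongrightarrow> \<rho> / (1 + \<rho> * delta N S \<rho> F)) (at (0::real))"
proof (rule tendstoI)
  fix e :: real assume e: "e > 0"
  define a0 where "a0 = \<rho> / (1 + \<rho> * delta N S \<rho> F)"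
  have a0: "0 < a0" "a0 \<le> \<rho>" "psi S F N \<rho> a0 = 0" using delta_root[OF h, of F] by (simp_all add: a0_def)
  define e' where "e' = min e (a0 / 2)"
  have e': "0 < e'" "e' \<le> e" "e' < a0" using e a0 by (auto simp: e'_def)
  have lo: "psi S F N \<rho> (a0 - e') > 0"
    using psi_strict[OF h, of "a0 - e'" a0 F] a0 e' by simp
  have hi: "psi S F N \<rho> (a0 + e') < 0"
    using psi_strict[OF h, of a0 "a0 + e'" F] a0 e' by simp
  have ev1: "\<forall>\<^sub>F t in at (0::real). psi S (F + t *\<^sub>R E) N \<rho> (a0 - e') > 0"
    using order_tendstoD(1)[OF psi_path_tendsto[OF h(1) _ h(2), of "a0 - e'"] lo] e' by simp
  have ev2: "\<forall>\<^sub>F t in at (0::real). psi S (F + t *\<^sub>R E) N \<rho> (a0 + e') < 0"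
    using order_tendstoD(2)[OF psi_path_tendsto[OF h(1) _ h(2), of "a0 + e'"] hi] e' a0 by simp
  show "\<forall>\<^sub>F t in at (0::real). dist (apath N S \<rho> F E t) (\<rho> / (1 + \<rho> * delta N S \<rho> F)) < e"
    using ev1 ev2
  proof eventually_elim
    case (elim t)
    define aT where "aT = apath N S \<rho> F E t"
    have r: "0 < aT" "aT \<le> \<rho>" "psi S (F + t *\<^sub>R E) N \<rho> aT = 0"
      using delta_root[OF h, of "F + t *\<^sub>R E"] by (simp_all add: aT_def apath_def)
    have "aT > a0 - e'"
    proof (rule ccontr)
      assume "\<not> aT > a0 - e'"
      then consider "aT < a0 - e'" | "aT = a0 - e'" by linarith
      then show False
      proof cases
        case 1 then show ?thesis using psi_strict[OF h, of aT "a0 - e'" "F + t *\<^sub>R E"] r elim by simp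
      next
        case 2 then show ?thesis using r elim by simp
      qed
    qed
    moreover have "aT < a0 + e'"
    proof (rule ccontr)
      assume "\<not> aT < a0 + e'"
      then consider "aT > a0 + e'" | "aT = a0 + e'" by linarith
      then show False
      proof cases
        case 1 then show ?thesis using psi_strict[OF h, of "a0 + e'" aT "F + t *\<^sub>R E"] r elim e' a0 by simp
      next
        case 2 then show ?thesis using r elim by simp
      qed
    qed
    ultimately show ?case using e' by (simp add: aT_def a0_def dist_real_def abs_less_iff)
  qed
qed



lemma key_identity:
  fixes Q0 Qt T0 Tt :: "complex^'n^'n" and a0 aa d0 dt :: real and N :: complex
  assumes res: "Qt - Q0 = Qt ** (a0 *\<^sub>R T0 - aa *\<^sub>R Tt) ** Q0"
    and ht: "of_real dt * N = trace (Tt ** Qt)" and h0: "of_real d0 * N = trace (T0 ** Q0)"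
    and ha: "a0 - aa = a0 * aa * (dt - d0)"
  shows "of_real (dt - d0) * (N - of_real (a0 * aa) * trace (T0 ** Qt ** T0 ** Q0))
       = trace ((Tt - T0) ** Qt) - of_real aa * trace (T0 ** Qt ** (Tt - T0) ** Q0)"
proof -
  define X1 where "X1 = trace (T0 ** Qt ** T0 ** Q0)"
  define X2 where "X2 = trace (T0 ** Qt ** (Tt - T0) ** Q0)"
  have m: "a0 *\<^sub>R T0 - aa *\<^sub>R Tt = (a0 - aa) *\<^sub>R T0 - aa *\<^sub>R (Tt - T0)"
    by (simp add: algebra_simps)
  have "T0 ** (Qt - Q0) = (a0 - aa) *\<^sub>R (T0 ** Qt ** T0 ** Q0) - aa *\<^sub>R (T0 ** Qt ** (Tt - T0) ** Q0)"
    unfolding res m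
    by (simp add: matrix_sub_ldistrib matrix_sub_rdistrib scaleR_matrix_left scaleR_matrix_right matrix_mul_assoc)
  then have e1: "trace (T0 ** Qt) - trace (T0 ** Q0) = of_real (a0 - aa) * X1 - of_real aa * X2"
    unfolding X1_def X2_def by (metis matrix_sub_ldistrib trace_sub trace_scaleR)
  have e2: "trace ((Tt - T0) ** Qt) = trace (Tt ** Qt) - trace (T0 ** Qt)"
    by (simp add: matrix_sub_rdistrib trace_sub)
  have e3: "complex_of_real (a0 - aa) = of_real a0 * of_real aa * (of_real dt - of_real d0)"
    using arg_cong[OF ha, of complex_of_real] by simp
  have T0Qt: "trace (T0 ** Qt) = (of_real a0 * of_real aa * (of_real dt - of_real d0) * X1 - of_real aa * X2) + of_real d0 * N"
    using e1 unfolding e3 h0[symmetric] by (simp add: diff_eq_eq)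
  show ?thesis
    unfolding X1_def[symmetric] X2_def[symmetric] e2 ht[symmetric] T0Qt
    by (simp add: algebra_simps)
qed

lemma B0_pos: fixes S :: "complex^'n^'n"
  assumes h: "cadj S = S" "N > 0" "\<rho> > 0" "0 < a0" "psi S F N \<rho> a0 = 0"
  shows "\<exists>\<beta>>0. of_nat N - of_real (a0 * a0) * trace (Tmat S F ** Qm S F a0 ** Tmat S F ** Qm S F a0) = complex_of_real \<beta>"
proof -
  define Q where "Q = Qm S F a0"
  define T where "T = Tmat S F"
  have a0: "a0 \<ge> 0" using h by simp
  have P: "a0 *\<^sub>R (T ** Q) = mat 1 - Q" using Qm_eq1[OF h(1) a0, of F] by (simp add: Q_def T_def algebra_simps)
  have P2: "a0 *\<^sub>R (Q ** T) = mat 1 - Q" using Qm_eq2[OF h(1) a0, of F] by (simp add: Q_def T_def algebra_simps)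
  have "(a0 *\<^sub>R (T ** Q)) ** (a0 *\<^sub>R (T ** Q)) = (a0 * a0) *\<^sub>R (T ** Q ** T ** Q)"
    by (simp add: scaleR_matrix_left scaleR_matrix_right matrix_mul_assoc)
  then have "(a0 * a0) *\<^sub>R (T ** Q ** T ** Q) = (mat 1 - Q) ** (mat 1 - Q)" using P by simp
  also have "\<dots> = mat 1 - Q - Q + Q ** Q"
    by (simp add: matrix_sub_ldistrib matrix_sub_rdistrib algebra_simps)
  finally have e1: "of_real (a0 * a0) * trace (T ** Q ** T ** Q) = of_nat CARD('n) - 2 * trace Q + trace (Q ** Q)"
    by (metis (no_types) trace_scaleR trace_add trace_sub trace_I mult_2 diff_diff_eq)
  obtain r where r: "r \<ge> 0" "trace (Q ** T ** Q) = complex_of_real r"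
    using trace_QTQ[OF h(1) a0 a0, of F] by (auto simp: Q_def T_def)
  have "Q ** (a0 *\<^sub>R (T ** Q)) = Q - Q ** Q" using P by (simp add: matrix_sub_ldistrib)
  then have "of_real a0 * trace (Q ** T ** Q) = trace Q - trace (Q ** Q)"
    by (metis scaleR_matrix_right trace_scaleR trace_sub matrix_mul_assoc)
  then have e2: "trace (Q ** Q) = trace Q - of_real a0 * of_real r" using r by simp
  have tq: "trace Q = complex_of_real (fQ S F a0)" using trace_Qm_real[OF h(1) a0, of F] by (simp add: Q_def fQ_def)
  have ps: "real N - real CARD('n) + fQ S F a0 = real N * a0 / \<rho>"
    using h(5) h(2) by (simp add: psi_def field_simps)
  have "of_nat N - of_real (a0 * a0) * trace (T ** Q ** T ** Q)
      = complex_of_real (real N - real CARD('n) + fQ S F a0 + a0 * r)"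
    unfolding e1 e2 tq by simp
  also have "\<dots> = complex_of_real (real N * a0 / \<rho> + a0 * r)" by (simp add: ps)
  finally have "of_nat N - of_real (a0 * a0) * trace (T ** Q ** T ** Q) = complex_of_real (real N * a0 / \<rho> + a0 * r)" .
  moreover have "real N * a0 / \<rho> + a0 * r > 0" using h r by (simp add: add_pos_nonneg)
  ultimately show ?thesis unfolding Q_def T_def by blast
qed

lemma R0_simp: fixes S :: "complex^'n^'n"
  assumes h: "cadj S = S" "0 < a0"
  shows "trace (X ** Qm S F a0) - of_real a0 * trace (Tmat S F ** Qm S F a0 ** X ** Qm S F a0)
       = trace (Qm S F a0 ** Qm S F a0 ** X)"
proof -
  define Q where "Q = Qm S F a0"
  define T where "T = Tmat S F"
  have a0: "a0 \<ge> 0" using h by simp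
  have P2: "a0 *\<^sub>R (Q ** T) = mat 1 - Q" using Qm_eq2[OF h(1) a0, of F] by (simp add: Q_def T_def algebra_simps)
  have "trace (T ** Q ** X ** Q) = trace (Q ** (T ** Q ** X))" by (rule trace_mul_sym)
  also have "\<dots> = trace (Q ** T ** Q ** X)" by (simp add: matrix_mul_assoc)
  finally have t1: "of_real a0 * trace (T ** Q ** X ** Q) = trace ((a0 *\<^sub>R (Q ** T)) ** Q ** X)"
    by (simp add: trace_scaleR scaleR_matrix_left)
  have t2: "trace ((a0 *\<^sub>R (Q ** T)) ** Q ** X) = trace (Q ** X) - trace (Q ** Q ** X)"
    unfolding P2 by (simp add: matrix_sub_rdistrib trace_sub)
  have t3: "trace (X ** Q) = trace (Q ** X)" by (rule trace_mul_sym)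
  show ?thesis unfolding Q_def[symmetric] T_def[symmetric] t1 t2 t3 by simp
qed

lemma double_delta: "(\<Sum>i\<in>(UNIV::'a::finite set). \<Sum>k\<in>(UNIV::'b::finite set). if i = m \<and> k = n then f else 0) = f"
proof -
  have "\<And>i. (\<Sum>k\<in>(UNIV::'b set). if i = m \<and> k = n then f else 0) = (if i = m then f else 0)"
    by (case_tac "i = m") simp_all
  then show ?thesis by simp
qed

lemma trace_munit1: "trace ((W::complex^'k^'n) ** cadj (munit m n c :: complex^'k^'n)) = cnj c * W $ m $ n"
  by (simp add: trace_def matrix_matrix_mult_def munit_def if_distrib if_distribR double_delta mult.commute cong: if_cong)

lemma trace_munit2: "trace ((munit m n c :: complex^'k^'n) ** (W::complex^'n^'k)) = c * W $ n $ m"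
  by (simp add: trace_def matrix_matrix_mult_def munit_def if_distrib if_distribR double_delta cong: if_cong)

lemma R0_munit: fixes S :: "complex^'n^'n"
  assumes h: "cadj S = S" "cadj Q = Q"
  shows "trace (Q ** Q ** T1 S F (munit m n c)) = cnj c * (S ** Q ** Q ** S ** F) $ m $ n
     + c * cnj ((S ** Q ** Q ** S ** F) $ m $ n)"
proof -
  define E where "E = munit m n c"
  define W where "W = S ** Q ** Q ** S ** F"
  have cW: "cadj W = cadj F ** S ** Q ** Q ** S" using h by (simp add: W_def cadj_mult matrix_mul_assoc)
  have "trace (Q ** Q ** (S ** F ** cadj E ** S)) = trace ((Q ** Q ** S ** F ** cadj E) ** S)"
    by (simp add: matrix_mul_assoc)
  also have "\<dots> = trace (S ** (Q ** Q ** S ** F ** cadj E))" by (rule trace_mul_sym)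
  also have "\<dots> = trace (W ** cadj E)" by (simp add: W_def matrix_mul_assoc)
  finally have a: "trace (Q ** Q ** (S ** F ** cadj E ** S)) = cnj c * W $ m $ n"
    by (simp add: E_def trace_munit1)
  have "trace (Q ** Q ** (S ** E ** cadj F ** S)) = trace ((Q ** Q ** S) ** (E ** cadj F ** S))"
    by (simp add: matrix_mul_assoc)
  also have "\<dots> = trace ((E ** cadj F ** S) ** (Q ** Q ** S))" by (rule trace_mul_sym)
  also have "\<dots> = trace (E ** cadj W)" by (simp add: cW matrix_mul_assoc)
  finally have b: "trace (Q ** Q ** (S ** E ** cadj F ** S)) = c * cnj (W $ m $ n)"
    by (simp add: E_def trace_munit2)
  show ?thesis unfolding T1_def E_def[symmetric] W_def[symmetric]
    by (simp add: matrix_add_ldistrib trace_add a b)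
qed



lemma deriv_dir: fixes S :: "complex^'n^'n" and F E :: "complex^'k^'n"
  assumes h: "cadj S = S" "N > 0" "\<rho> > 0"
  defines "a0 \<equiv> \<rho> / (1 + \<rho> * delta N S \<rho> F)"
  defines "B0 \<equiv> of_nat N - of_real (a0 * a0) * trace (Tmat S F ** Qm S F a0 ** Tmat S F ** Qm S F a0)"
  shows "((\<lambda>t. delta N S \<rho> (F + t *\<^sub>R E)) has_real_derivative
            Re (trace (Qm S F a0 ** Qm S F a0 ** T1 S F E) / B0)) (at 0)"
proof -
  define d where "d t = delta N S \<rho> (F + t *\<^sub>R E)" for t
  define a where "a = apath N S \<rho> F E"
  define T0 where "T0 = Tmat S F"
  define Q0 where "Q0 = Qm S F a0"
  define Tt where "Tt t = Tmat S (F + t *\<^sub>R E)" for t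
  define Qt where "Qt t = Qm S (F + t *\<^sub>R E) (a t)" for t
  define X where "X t = T1 S F E + t *\<^sub>R T2 S E" for t
  define B where "B t = of_nat N - of_real (a0 * a t) * trace (T0 ** Qt t ** T0 ** Q0)" for t
  define R where "R t = trace (X t ** Qt t) - of_real (a t) * trace (T0 ** Qt t ** X t ** Q0)" for t
  define R0 where "R0 = trace (T1 S F E ** Q0) - of_real a0 * trace (T0 ** Q0 ** T1 S F E ** Q0)"
  have d0: "d 0 = delta N S \<rho> F" by (simp add: d_def)
  have rt: "0 < a t" "a t \<le> \<rho>" "d t \<ge> 0" "of_real (d t) * of_nat N = trace (Tt t ** Qt t)" for t
    using delta_root[OF h, of "F + t *\<^sub>R E"] by (simp_all add: a_def apath_def d_def Tt_def Qt_def)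
  have r0: "0 < a0" "psi S F N \<rho> a0 = 0" "of_real (d 0) * of_nat N = trace (T0 ** Q0)" "delta N S \<rho> F \<ge> 0"
    using delta_root[OF h, of F] by (simp_all add: a0_def d0 T0_def Q0_def)
  have ha: "a0 - a t = a0 * a t * (d t - d 0)" for t
  proof -
    have p1: "1 + \<rho> * d t > 0" using rt(3)[of t] h by (simp add: add_pos_nonneg)
    have p2: "1 + \<rho> * d 0 > 0" using r0(4) h by (simp add: add_pos_nonneg d0)
    have e1: "a t = \<rho> / (1 + \<rho> * d t)" by (simp add: a_def apath_def d_def)
    have e2: "a0 = \<rho> / (1 + \<rho> * d 0)" by (simp add: a0_def d0)
    have i1: "1 / a t = 1 / \<rho> + d t" unfolding e1 using p1 h by (simp add: field_simps)
    have i0: "1 / a0 = 1 / \<rho> + d 0" unfolding e2 using p2 h by (simp add: field_simps)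
    have "a0 - a t = a0 * a t * (1 / a t - 1 / a0)" using rt(1)[of t] r0(1) by (simp add: field_simps)
    then show ?thesis by (simp add: i1 i0)
  qed
  have res: "Qt t - Q0 = Qt t ** (a0 *\<^sub>R T0 - a t *\<^sub>R Tt t) ** Q0" for t
    unfolding Qt_def Q0_def T0_def Tt_def
    by (rule Qm_resolvent[OF h(1)]) (use rt(1)[of t] r0(1) in auto)
  have TX: "Tt t - T0 = t *\<^sub>R X t" for t by (simp add: Tt_def T0_def X_def Tmat_path)
  have key: "of_real (d t - d 0) * B t = of_real t * R t" for t
  proof -
    have "of_real (d t - d 0) * B t = trace ((Tt t - T0) ** Qt t) - of_real (a t) * trace (T0 ** Qt t ** (Tt t - T0) ** Q0)"
      unfolding B_def by (rule key_identity[OF res rt(4) r0(3) ha])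
    also have "\<dots> = of_real t * R t"
      unfolding TX R_def
      by (simp add: scaleR_matrix_left scaleR_matrix_right trace_scaleR algebra_simps)
    finally show ?thesis .
  qed
  have La: "(a \<longlongrightarrow> a0) (at 0)" unfolding a_def a0_def by (rule apath_tendsto[OF h])
  have LX: "(X \<longlongrightarrow> T1 S F E) (at 0)"
  proof -
    have "(X \<longlongrightarrow> T1 S F E + 0 *\<^sub>R T2 S E) (at 0)" unfolding X_def[abs_def] by (intro tendsto_intros)
    then show ?thesis by simp
  qed
  have LT: "(Tt \<longlongrightarrow> T0) (at 0)" unfolding Tt_def[abs_def] T0_def by (rule Tmat_path_tendsto)
  have LQ: "(Qt \<longlongrightarrow> Q0) (at 0)"
  proof -
    define C where "C = real CARD('n) ^ 2 * real CARD('n) ^ 2"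
    have "((\<lambda>t. C * esum (a0 *\<^sub>R T0 - a t *\<^sub>R Tt t)) \<longlongrightarrow> C * esum (a0 *\<^sub>R T0 - a0 *\<^sub>R T0)) (at 0)"
      by (intro tendsto_intros tendsto_esum La LT)
    then have lim: "((\<lambda>t. C * esum (a0 *\<^sub>R T0 - a t *\<^sub>R Tt t)) \<longlongrightarrow> 0) (at 0)"
      by (simp add: esum_def)
    have "((\<lambda>t. esum (Qt t - Q0)) \<longlongrightarrow> 0) (at 0)"
    proof (rule Lim_null_comparison[OF _ lim], rule always_eventually, rule allI)
      fix t
      have "esum (Qt t - Q0) \<le> real CARD('n) ^ 2 * esum (a0 *\<^sub>R T0 - a t *\<^sub>R Tt t) * real CARD('n) ^ 2"
        unfolding Qt_def Q0_def T0_def Tt_def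
        by (rule Qm_diff_esum[OF h(1)]) (use rt(1)[of t] r0(1) in auto)
      then show "norm (esum (Qt t - Q0)) \<le> C * esum (a0 *\<^sub>R T0 - a t *\<^sub>R Tt t)"
        using esum_nonneg[of "Qt t - Q0"] by (simp add: C_def mult_ac)
    qed
    then show ?thesis by (rule esum_zero_tendsto)
  qed
  have LB: "(B \<longlongrightarrow> B0) (at 0)"
  proof -
    have "(B \<longlongrightarrow> of_nat N - of_real (a0 * a0) * trace (T0 ** Q0 ** T0 ** Q0)) (at 0)"
      unfolding B_def[abs_def]
      by (intro tendsto_diff tendsto_const tendsto_mult tendsto_of_real tendsto_trace tendsto_mmult LQ La)
    then show ?thesis by (simp add: B0_def T0_def Q0_def)
  qed
  have LR: "(R \<longlongrightarrow> R0) (at 0)"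
    unfolding R_def[abs_def] R0_def
    by (intro tendsto_diff tendsto_const tendsto_mult tendsto_of_real tendsto_trace tendsto_mmult LQ La LX)
  obtain \<beta> where \<beta>: "\<beta> > 0" "B0 = complex_of_real \<beta>"
    using B0_pos[OF h r0(1,2)] by (auto simp: B0_def)
  have B0ne: "B0 \<noteq> 0" using \<beta> by simp
  have ev: "\<forall>\<^sub>F t in at (0::real). R t / B t = of_real ((d t - d 0) / (t - 0))"
    using tendsto_imp_eventually_ne[OF LB B0ne] eventually_neq_at_within[of 0 0 UNIV]
  proof eventually_elim
    case (elim t)
    have "of_real (d t - d 0) * B t = of_real t * R t" by (rule key)
    then show ?case using elim by (simp add: field_simps)
  qed
  have "((\<lambda>t. complex_of_real ((d t - d 0) / (t - 0))) \<longlongrightarrow> R0 / B0) (at 0)"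
    by (rule Lim_transform_eventually[OF tendsto_divide[OF LR LB B0ne] ev])
  then have "((\<lambda>t. Re (complex_of_real ((d t - d 0) / (t - 0)))) \<longlongrightarrow> Re (R0 / B0)) (at 0)"
    by (rule tendsto_Re)
  then have "((\<lambda>t. (d t - d 0) / (t - 0)) \<longlongrightarrow> Re (R0 / B0)) (at 0)" by simp
  moreover have "R0 = trace (Qm S F a0 ** Qm S F a0 ** T1 S F E)"
    unfolding R0_def T0_def Q0_def by (rule R0_simp[OF h(1) r0(1)])
  ultimately show ?thesis unfolding has_field_derivative_iff d_def by simp
qed



theorem proposition3:
  fixes R S :: "complex^'nt^'nt" and F :: "complex^'k^'nt" and NS :: nat and \<rho> :: real
  assumes "NS > 0"
    and "psd R"
    and "psd S" and "S ** S = R"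
    and "\<rho> > 0"
  shows "\<forall>m n. has_wirtinger_conj_deriv (\<lambda>G. delta NS S \<rho> G) F m n
     (let \<alpha> = complex_of_real (\<rho> / (1 + \<rho> * delta NS S \<rho> F));
          T = Tmat S F;
          Q = matrix_inv (mat 1 + mat \<alpha> ** T)
      in (S ** Q ** Q ** S ** F) $ m $ n
         / (of_nat NS - \<alpha>\<^sup>2 * trace ((T ** Q) ** (T ** Q))))"
proof (intro allI)
  fix m n
  have hS: "cadj S = S" using assms(3) by (simp add: psd_def hermitian_def)
  define a0 where "a0 = \<rho> / (1 + \<rho> * delta NS S \<rho> F)"
  define Q0 where "Q0 = Qm S F a0"
  define T0 where "T0 = Tmat S F"
  define B0 where "B0 = of_nat NS - of_real (a0 * a0) * trace (T0 ** Q0 ** T0 ** Q0)"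
  define w where "w = (S ** Q0 ** Q0 ** S ** F) $ m $ n"
  have r0: "0 < a0" "psi S F NS \<rho> a0 = 0"
    using delta_root[OF hS assms(1,5), of F] by (simp_all add: a0_def)
  obtain \<beta> where \<beta>: "\<beta> > 0" "B0 = complex_of_real \<beta>"
    using B0_pos[OF hS assms(1,5) r0] by (auto simp: B0_def T0_def Q0_def)
  have cQ: "cadj Q0 = Q0" unfolding Q0_def by (rule cadj_Qm[OF hS]) (use r0 in simp)
  have p1: "F + munit m n (complex_of_real t) = F + t *\<^sub>R munit m n 1" for t
    by (auto simp: vec_eq_iff munit_def cscaleR)
  have p2: "F + munit m n (\<i> * complex_of_real t) = F + t *\<^sub>R munit m n \<i>" for t
    by (auto simp: vec_eq_iff munit_def cscaleR mult.commute)
  define Rx where "Rx = trace (Q0 ** Q0 ** T1 S F (munit m n 1))"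
  define Ry where "Ry = trace (Q0 ** Q0 ** T1 S F (munit m n \<i>))"
  have Rx: "Rx = w + cnj w" unfolding Rx_def w_def using R0_munit[OF hS cQ, of F m n 1] by simp
  have Ry: "Ry = - \<i> * w + \<i> * cnj w" unfolding Ry_def w_def using R0_munit[OF hS cQ, of F m n \<i>] by simp
  have D1: "((\<lambda>t. delta NS S \<rho> (F + t *\<^sub>R munit m n 1)) has_real_derivative Re (Rx / B0)) (at 0)"
    using deriv_dir[OF hS assms(1,5), of F "munit m n 1"]
    by (simp add: Rx_def B0_def Q0_def T0_def a0_def)
  have D2: "((\<lambda>t. delta NS S \<rho> (F + t *\<^sub>R munit m n \<i>)) has_real_derivative Re (Ry / B0)) (at 0)"
    using deriv_dir[OF hS assms(1,5), of F "munit m n \<i>"]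
    by (simp add: Ry_def B0_def Q0_def T0_def a0_def)
  have mi: "matrix_inv (mat 1 + mat (complex_of_real a0) ** Tmat S F) = Q0"
    by (simp add: Q0_def Qm_def Am_def)
  have val: "(let \<alpha> = complex_of_real (\<rho> / (1 + \<rho> * delta NS S \<rho> F));
          T = Tmat S F;
          Q = matrix_inv (mat 1 + mat \<alpha> ** T)
      in (S ** Q ** Q ** S ** F) $ m $ n
         / (of_nat NS - \<alpha>\<^sup>2 * trace ((T ** Q) ** (T ** Q)))) = w / B0"
    unfolding Let_def a0_def[symmetric] mi
    by (simp add: w_def B0_def T0_def matrix_mul_assoc power2_eq_square)
  also have "\<dots> = (complex_of_real (Re (Rx / B0)) + \<i> * complex_of_real (Re (Ry / B0))) / 2"
    unfolding Rx Ry \<beta>(2) by (simp add: complex_eq_iff)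
  finally have val': "(let \<alpha> = complex_of_real (\<rho> / (1 + \<rho> * delta NS S \<rho> F));
          T = Tmat S F;
          Q = matrix_inv (mat 1 + mat \<alpha> ** T)
      in (S ** Q ** Q ** S ** F) $ m $ n
         / (of_nat NS - \<alpha>\<^sup>2 * trace ((T ** Q) ** (T ** Q))))
      = (complex_of_real (Re (Rx / B0)) + \<i> * complex_of_real (Re (Ry / B0))) / 2" .
  show "has_wirtinger_conj_deriv (\<lambda>G. delta NS S \<rho> G) F m n
     (let \<alpha> = complex_of_real (\<rho> / (1 + \<rho> * delta NS S \<rho> F));
          T = Tmat S F;
          Q = matrix_inv (mat 1 + mat \<alpha> ** T)
      in (S ** Q ** Q ** S ** F) $ m $ n
         / (of_nat NS - \<alpha>\<^sup>2 * trace ((T ** Q) ** (T ** Q))))"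
    unfolding has_wirtinger_conj_deriv_def val' p1 p2
    using D1 D2 by blast
qed


end
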